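(* Let $\mathbb{U}_{n,G}$ be the class of all unitary $n$-qubit channels of gate complexity at most $G$, and let $\varepsilon<1/2$. Any online learner for $\mathbb{U}_{n,G}$ makes $\Omega(\min\{2^n,\sqrt{G}\})$ many $\varepsilon$-mistakes against a worst-case adversary. This remains true even if the adversary is forced to decide on a channel in $\mathbb{U}_{n,G}$ before the interaction with the learner.
   Context: A unitary $n$-qubit channel $\rho\mapsto U\rho U^\dagger$ has gate complexity at most $G$ if it can be written as a composition of at most $G$ two-qubit gate channels, each acting on some pair of the $n$ qubits (identity elsewhere). Online learning a class $\mathsf{C}$: in each round the adversary presents a channel test operator $E_{A,B}$ ($E_{A,B}\geq0$ on two $n$-qubit systems with $E_{A,B}\leq\sigma_A\otimes\mathbb{1}_B$ for some density operator $\sigma_A$), the learner predicts a value in $[0,1]$ based on past information, and the adversary reveals the true value $\mathrm{Tr}[E_{A,B}C^{\mathcal{N}}_{A,B}]$ for the target $\mathcal{N}\in\mathsf{C}$, with $C^{\mathcal{N}}_{A,B}=\sum_{i,j}|i\rangle\langle j|\otimes\mathcal{N}(|i\rangle\langle j|)$. An $\varepsilon$-mistake is a round where the prediction differs from the true value by more than $\varepsilon$. *)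

theory Defs
  imports Complex_Main "Jordan_Normal_Form.Matrix"
begin

text \<open>Hilbert space of n qubits has dimension 2^n; basis index x, qubit k is bit k of x.\<close>
definition qdim :: "nat \<Rightarrow> nat" where
  "qdim n = 2 ^ n"

definition adj :: "complex mat \<Rightarrow> complex mat" where
  "adj A = mat (dim_col A) (dim_row A) (\<lambda>(i, j). cnj (A $$ (j, i)))"

definition unitary_mat :: "nat \<Rightarrow> complex mat \<Rightarrow> bool" where
  "unitary_mat d V \<longleftrightarrow> V \<in> carrier_mat d d \<and> V * adj V = 1\<^sub>m d \<and> adj V * V = 1\<^sub>m d"

definition psd :: "nat \<Rightarrow> complex mat \<Rightarrow> bool" where
  "psd d A \<longleftrightarrow> A \<in> carrier_mat d d \<and>
     (\<forall>v :: nat \<Rightarrow> complex. let q = (\<Sum>i<d. \<Sum>j<d. cnj (v i) * A $$ (i, j) * v j)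
                                in Im q = 0 \<and> Re q \<ge> 0)"

definition mtrace :: "complex mat \<Rightarrow> complex" where
  "mtrace A = (\<Sum>i<dim_row A. A $$ (i, i))"

definition density_op :: "nat \<Rightarrow> complex mat \<Rightarrow> bool" where
  "density_op d \<sigma> \<longleftrightarrow> psd d \<sigma> \<and> mtrace \<sigma> = 1"

text \<open>Tensor (Kronecker) product; first factor is the more significant index.\<close>
definition kron :: "complex mat \<Rightarrow> complex mat \<Rightarrow> complex mat" where
  "kron A B = mat (dim_row A * dim_row B) (dim_col A * dim_col B)
     (\<lambda>(i, j). A $$ (i div dim_row B, j div dim_col B) * B $$ (i mod dim_row B, j mod dim_col B))"

definition ketbra :: "nat \<Rightarrow> nat \<Rightarrow> nat \<Rightarrow> complex mat" where
  "ketbra d i j = mat d d (\<lambda>(a, b). if a = i \<and> b = j then 1 else 0)"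

type_synonym channel = "complex mat \<Rightarrow> complex mat"

definition unitary_channel :: "complex mat \<Rightarrow> channel" where
  "unitary_channel U = (\<lambda>\<rho>. U * \<rho> * adj U)"

definition qbit :: "nat \<Rightarrow> nat \<Rightarrow> nat" where
  "qbit k x = (x div 2 ^ k) mod 2"

text \<open>The 4x4 unitary V acting on qubits p (first) and q (second), identity on the rest.\<close>
definition embed_gate :: "nat \<Rightarrow> nat \<Rightarrow> nat \<Rightarrow> complex mat \<Rightarrow> complex mat" where
  "embed_gate n p q V = mat (qdim n) (qdim n) (\<lambda>(x, y).
      if (\<forall>k<n. k \<noteq> p \<and> k \<noteq> q \<longrightarrow> qbit k x = qbit k y)
      then V $$ (2 * qbit p x + qbit q x, 2 * qbit p y + qbit q y) else 0)"

definition two_qubit_gate_channel :: "nat \<Rightarrow> channel \<Rightarrow> bool" where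
  "two_qubit_gate_channel n \<G> \<longleftrightarrow>
     (\<exists>p q V. p < n \<and> q < n \<and> p \<noteq> q \<and> unitary_mat 4 V \<and>
              \<G> = unitary_channel (embed_gate n p q V))"

definition gate_class :: "nat \<Rightarrow> nat \<Rightarrow> channel set" where
  "gate_class n G = {foldr (\<circ>) gs id | gs. length gs \<le> G \<and> (\<forall>g\<in>set gs. two_qubit_gate_channel n g)}"

definition choi :: "nat \<Rightarrow> channel \<Rightarrow> complex mat" where
  "choi n \<N> = mat (qdim n * qdim n) (qdim n * qdim n) (\<lambda>(x, y).
      \<Sum>i<qdim n. \<Sum>j<qdim n. kron (ketbra (qdim n) i j) (\<N> (ketbra (qdim n) i j)) $$ (x, y))"

definition channel_test :: "nat \<Rightarrow> complex mat \<Rightarrow> bool" where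
  "channel_test n E \<longleftrightarrow> psd (qdim n * qdim n) E \<and>
     (\<exists>\<sigma>. density_op (qdim n) \<sigma> \<and> psd (qdim n * qdim n) (kron \<sigma> (1\<^sub>m (qdim n)) - E))"

definition test_value :: "nat \<Rightarrow> complex mat \<Rightarrow> channel \<Rightarrow> real" where
  "test_value n E \<N> = Re (mtrace (E * choi n \<N>))"

text \<open>A history is the list of past (test operator, revealed true value) pairs.
  A (deterministic) learner maps the history and the current test to a prediction;
  an adversary strategy maps the history to the next test operator.\<close>
type_synonym history = "(complex mat \<times> real) list"

primrec hist :: "nat \<Rightarrow> (history \<Rightarrow> complex mat) \<Rightarrow> channel \<Rightarrow> nat \<Rightarrow> history" where
  "hist n A \<N> 0 = []"
| "hist n A \<N> (Suc t) = hist n A \<N> t @ [(A (hist n A \<N> t), test_value n (A (hist n A \<N> t)) \<N>)]"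

definition eps_mistakes ::
  "nat \<Rightarrow> (history \<Rightarrow> complex mat \<Rightarrow> real) \<Rightarrow> (history \<Rightarrow> complex mat) \<Rightarrow> channel \<Rightarrow> real \<Rightarrow> nat \<Rightarrow> nat" where
  "eps_mistakes n L A \<N> \<epsilon> T = card {t. t < T \<and>
      \<bar>L (hist n A \<N> t) (A (hist n A \<N> t)) - test_value n (A (hist n A \<N> t)) \<N>\<bar> > \<epsilon>}"

end

theory Submission
  imports Defs
begin

lemma qbit_bit: "qbit k x = (if bit x k then 1 else 0)"
  unfolding qbit_def by (simp add: bit_iff_odd odd_iff_mod_2_eq_one)

lemma bits_eq_imp_eq:
  fixes x y :: nat
  assumes "x < 2^n" "y < 2^n" "\<forall>k<n. bit x k = bit y k"
  shows "x = y"
proof (rule bit_eqI)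
  fix k show "bit x k = bit y k"
  proof (cases "k < n")
    case True then show ?thesis using assms by auto
  next
    case False
    have "take_bit n x = x" "take_bit n y = y" using assms by (auto intro: take_bit_nat_eq_self)
    then show ?thesis using False by (metis bit_take_bit_iff)
  qed
qed

lemma bit_lt_pow: "x < (2::nat)^n \<Longrightarrow> bit x k \<Longrightarrow> k < n"
  by (metis bit_take_bit_iff take_bit_nat_eq_self)

definition cflip :: "nat \<Rightarrow> nat \<Rightarrow> nat \<Rightarrow> nat" where
  "cflip p q x = (if bit x p then xor x (2^q) else x)"

definition bflip :: "nat \<Rightarrow> nat \<Rightarrow> (nat \<Rightarrow> bool) \<Rightarrow> nat \<Rightarrow> bool" where
  "bflip p q b = b(q := (b q \<noteq> b p))"

lemma bit_flip: "p \<noteq> q \<Longrightarrow> bit (cflip p q x) = bflip p q (bit x)"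
  by (auto simp: cflip_def bflip_def bit_xor_iff bit_exp_iff fun_eq_iff)

lemma flip_lt: "x < 2^n \<Longrightarrow> q < n \<Longrightarrow> cflip p q x < (2::nat)^n"
proof -
  assume a: "x < 2^n" "q < n"
  have "take_bit n (xor x (2^q)) = xor x (2^q)"
    by (rule bit_eqI) (use a in \<open>auto simp: bit_take_bit_iff bit_xor_iff bit_exp_iff dest: bit_lt_pow\<close>)
  then show ?thesis unfolding cflip_def by (metis a(1) take_bit_nat_eq_self_iff)
qed

lemma flip_flip: "p \<noteq> q \<Longrightarrow> cflip p q (cflip p q x) = x"
  by (rule bit_eqI) (auto simp add: bit_flip bflip_def)

lemma mult_entry:
  assumes "A \<in> carrier_mat d1 d2" "B \<in> carrier_mat d2 d3" "i < d1" "j < d3"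
  shows "(A * B) $$ (i, j) = (\<Sum>k<d2. A $$ (i, k) * B $$ (k, j))"
  using assms by (simp add: scalar_prod_def lessThan_atLeast0)

definition monom :: "nat \<Rightarrow> (nat \<Rightarrow> nat) \<Rightarrow> (nat \<Rightarrow> complex) \<Rightarrow> complex mat" where
  "monom d \<pi> ph = mat d d (\<lambda>(i, j). if i = \<pi> j then ph j else 0)"

lemma mono_carrier[simp]: "monom d \<pi> ph \<in> carrier_mat d d"
  by (simp add: monom_def)

lemma mono_mult:
  assumes "\<forall>j<d. \<pi>2 j < d"
  shows "monom d \<pi>1 ph1 * monom d \<pi>2 ph2 = monom d (\<lambda>j. \<pi>1 (\<pi>2 j)) (\<lambda>j. ph1 (\<pi>2 j) * ph2 j)"
proof (rule eq_matI)
  fix i j assume ij: "i < dim_row (monom d (\<lambda>j. \<pi>1 (\<pi>2 j)) (\<lambda>j. ph1 (\<pi>2 j) * ph2 j))"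
    "j < dim_col (monom d (\<lambda>j. \<pi>1 (\<pi>2 j)) (\<lambda>j. ph1 (\<pi>2 j) * ph2 j))"
  then have i: "i < d" and j: "j < d" by (auto simp: monom_def)
  have "(monom d \<pi>1 ph1 * monom d \<pi>2 ph2) $$ (i, j)
      = (\<Sum>k<d. monom d \<pi>1 ph1 $$ (i, k) * monom d \<pi>2 ph2 $$ (k, j))"
    by (rule mult_entry[OF mono_carrier mono_carrier i j])
  also have "\<dots> = (\<Sum>k<d. if k = \<pi>2 j then (if i = \<pi>1 k then ph1 k else 0) * ph2 j else 0)"
    by (rule sum.cong) (auto simp: monom_def i j)
  also have "\<dots> = (if i = \<pi>1 (\<pi>2 j) then ph1 (\<pi>2 j) else 0) * ph2 j"
    using assms j by (simp add: sum.delta)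
  finally show "(monom d \<pi>1 ph1 * monom d \<pi>2 ph2) $$ (i, j)
      = monom d (\<lambda>j. \<pi>1 (\<pi>2 j)) (\<lambda>j. ph1 (\<pi>2 j) * ph2 j) $$ (i, j)"
    using i j by (simp add: monom_def)
qed (auto simp: monom_def)

lemma mono_cong:
  assumes "\<forall>j<d. \<pi> j = \<pi>' j" "\<forall>j<d. ph j = ph' j"
  shows "monom d \<pi> ph = monom d \<pi>' ph'"
  using assms by (intro eq_matI) (auto simp: monom_def)

lemma adj_mono:
  assumes "\<forall>j<d. \<pi> j < d \<and> \<pi> (\<pi> j) = j"
  shows "adj (monom d \<pi> ph) = monom d \<pi> (\<lambda>j. cnj (ph (\<pi> j)))"
proof (rule eq_matI)
  fix i j assume "i < dim_row (monom d \<pi> (\<lambda>j. cnj (ph (\<pi> j))))" "j < dim_col (monom d \<pi> (\<lambda>j. cnj (ph (\<pi> j))))"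
  then have i: "i < d" and j: "j < d" by (auto simp: monom_def)
  show "adj (monom d \<pi> ph) $$ (i, j) = monom d \<pi> (\<lambda>j. cnj (ph (\<pi> j))) $$ (i, j)"
    using i j assms by (auto simp: adj_def monom_def)
qed (auto simp: adj_def monom_def)

definition dg :: "nat \<Rightarrow> ((nat \<Rightarrow> bool) \<Rightarrow> real) \<Rightarrow> complex mat" where
  "dg n \<Phi> = monom (2^n) (\<lambda>j. j) (\<lambda>j. cis (\<Phi> (bit j)))"

definition cn :: "nat \<Rightarrow> nat \<Rightarrow> nat \<Rightarrow> complex mat" where
  "cn n p q = monom (2^n) (cflip p q) (\<lambda>_. 1)"

lemma dg_carrier[simp]: "dg n \<Phi> \<in> carrier_mat (2^n) (2^n)"
  by (simp add: dg_def)

lemma cn_carrier[simp]: "cn n p q \<in> carrier_mat (2^n) (2^n)"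
  by (simp add: cn_def)

lemma dg_mult: "dg n \<Phi> * dg n \<Psi> = dg n (\<lambda>b. \<Phi> b + \<Psi> b)"
  unfolding dg_def by (subst mono_mult) (auto simp: cis_mult intro!: mono_cong)

lemma adj_dg: "adj (dg n \<Phi>) = dg n (\<lambda>b. - \<Phi> b)"
  unfolding dg_def by (subst adj_mono) (auto intro!: mono_cong simp: cis_cnj)

lemma adj_cn: "p \<noteq> q \<Longrightarrow> q < n \<Longrightarrow> adj (cn n p q) = cn n p q"
  unfolding cn_def by (subst adj_mono) (auto intro!: mono_cong simp: flip_lt flip_flip)

lemma cn_dg_cn: "p \<noteq> q \<Longrightarrow> q < n \<Longrightarrow> cn n p q * dg n \<Phi> * cn n p q = dg n (\<lambda>b. \<Phi> (bflip p q b))"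
  unfolding cn_def dg_def
  by (subst mono_mult, simp, subst mono_mult) (auto simp: flip_lt flip_flip bit_flip intro!: mono_cong)

lemma dg_zero: "dg n (\<lambda>b. 0) = 1\<^sub>m (2^n)"
  by (rule eq_matI) (auto simp: dg_def monom_def)


lemma mono_id_one: "monom d (\<lambda>j. j) (\<lambda>_. 1) = 1\<^sub>m d"
  by (rule eq_matI) (auto simp: monom_def)

lemma unitary_mono:
  assumes "\<forall>j<d. \<pi> j < d \<and> \<pi> (\<pi> j) = j" "\<forall>j<d. ph j * cnj (ph j) = 1"
  shows "unitary_mat d (monom d \<pi> ph)"
proof -
  have "monom d \<pi> ph * adj (monom d \<pi> ph) = monom d (\<lambda>j. j) (\<lambda>_. 1)"
    using assms by (subst adj_mono, simp, subst mono_mult) (auto intro!: mono_cong)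
  moreover have "adj (monom d \<pi> ph) * monom d \<pi> ph = monom d (\<lambda>j. j) (\<lambda>_. 1)"
    using assms by (subst adj_mono, simp, subst mono_mult) (auto intro!: mono_cong simp: mult.commute)
  ultimately show ?thesis by (simp add: unitary_mat_def mono_id_one)
qed

definition pcode :: "nat \<Rightarrow> nat \<Rightarrow> nat \<Rightarrow> nat" where
  "pcode p q x = 2 * (if bit x p then 1 else 0) + (if bit x q then 1 else 0)"

lemma pcode_lt: "pcode p q x < 4"
  by (simp add: pcode_def)

lemma pcode_eq: "pcode p q x = pcode p q z \<longleftrightarrow> (bit x p = bit z p \<and> bit x q = bit z q)"
  by (auto simp: pcode_def split: if_splits)

lemma embed_entry:
  assumes "x < 2^n" "y < 2^n"
  shows "embed_gate n p q V $$ (x, y) =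
    (if (\<forall>k<n. k \<noteq> p \<and> k \<noteq> q \<longrightarrow> bit x k = bit y k) then V $$ (pcode p q x, pcode p q y) else 0)"
proof -
  have c: "(\<forall>k<n. k \<noteq> p \<and> k \<noteq> q \<longrightarrow> qbit k x = qbit k y) = (\<forall>k<n. k \<noteq> p \<and> k \<noteq> q \<longrightarrow> bit x k = bit y k)"
    unfolding qbit_bit by auto
  have i: "2 * qbit p x + qbit q x = pcode p q x" "2 * qbit p y + qbit q y = pcode p q y"
    by (simp_all add: qbit_bit pcode_def)
  show ?thesis using assms unfolding embed_gate_def qdim_def
    by (simp only: index_mat case_prod_conv c i)
qed

lemma if_zero_combine: "M = (if B then v else 0) \<Longrightarrow> (if A then M else 0) = (if A \<and> B then v else 0)"
  by simp

lemma embed_mono: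
  assumes pq: "p \<noteq> q" "p < n" "q < n"
    and \<sigma>: "\<forall>i<4. \<sigma> i < 4"
    and \<pi>: "\<forall>y<2^n. \<pi> y < 2^n \<and> (\<forall>k<n. k \<noteq> p \<and> k \<noteq> q \<longrightarrow> bit (\<pi> y) k = bit y k)
              \<and> pcode p q (\<pi> y) = \<sigma> (pcode p q y)"
  shows "embed_gate n p q (monom 4 \<sigma> ph) = monom (2^n) \<pi> (\<lambda>y. ph (pcode p q y))"
proof (rule eq_matI)
  fix x y assume "x < dim_row (monom (2^n) \<pi> (\<lambda>y. ph (pcode p q y)))"
    "y < dim_col (monom (2^n) \<pi> (\<lambda>y. ph (pcode p q y)))"
  then have x: "x < 2^n" and y: "y < 2^n" by (auto simp: monom_def)
  have py: "\<pi> y < 2^n" "\<forall>k<n. k \<noteq> p \<and> k \<noteq> q \<longrightarrow> bit (\<pi> y) k = bit y k"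
     "pcode p q (\<pi> y) = \<sigma> (pcode p q y)" using \<pi> y by auto
  have iff: "((\<forall>k<n. k \<noteq> p \<and> k \<noteq> q \<longrightarrow> bit x k = bit y k) \<and> pcode p q x = \<sigma> (pcode p q y))
       \<longleftrightarrow> x = \<pi> y"
  proof
    assume a: "(\<forall>k<n. k \<noteq> p \<and> k \<noteq> q \<longrightarrow> bit x k = bit y k) \<and> pcode p q x = \<sigma> (pcode p q y)"
    then have "pcode p q x = pcode p q (\<pi> y)" using py by simp
    then have "bit x p = bit (\<pi> y) p" "bit x q = bit (\<pi> y) q" by (auto simp: pcode_eq)
    then have "\<forall>k<n. bit x k = bit (\<pi> y) k" using a py by metis
    then show "x = \<pi> y" using bits_eq_imp_eq x py(1) by blast
  next
    assume "x = \<pi> y" then show "(\<forall>k<n. k \<noteq> p \<and> k \<noteq> q \<longrightarrow> bit x k = bit y k) \<and> pcode p q x = \<sigma> (pcode p q y)"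
      using py by simp
  qed
  have "embed_gate n p q (monom 4 \<sigma> ph) $$ (x, y) =
    (if (\<forall>k<n. k \<noteq> p \<and> k \<noteq> q \<longrightarrow> bit x k = bit y k) then monom 4 \<sigma> ph $$ (pcode p q x, pcode p q y) else 0)"
    by (rule embed_entry[OF x y])
  also have "\<dots> = (if (\<forall>k<n. k \<noteq> p \<and> k \<noteq> q \<longrightarrow> bit x k = bit y k) \<and> pcode p q x = \<sigma> (pcode p q y)
                    then ph (pcode p q y) else 0)"
  proof -
    have "monom 4 \<sigma> ph $$ (pcode p q x, pcode p q y) = (if pcode p q x = \<sigma> (pcode p q y) then ph (pcode p q y) else 0)"
      by (simp add: monom_def pcode_lt)
    then show ?thesis by (rule if_zero_combine)
  qed
  also have "\<dots> = monom (2^n) \<pi> (\<lambda>y. ph (pcode p q y)) $$ (x, y)"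
    using iff x y by (simp add: monom_def)
  finally show "embed_gate n p q (monom 4 \<sigma> ph) $$ (x, y) = monom (2^n) \<pi> (\<lambda>y. ph (pcode p q y)) $$ (x, y)" .
qed (auto simp: embed_gate_def monom_def qdim_def)

definition cnv :: "nat \<Rightarrow> nat" where
  "cnv i = (if i < 2 then i else 5 - i)"

lemma gate_dg:
  assumes "p \<noteq> q" "p < n" "q < n"
  shows "two_qubit_gate_channel n (unitary_channel (dg n (\<lambda>b. g (b p) (b q))))"
proof -
  define V where "V = monom 4 (\<lambda>i. i) (\<lambda>i. cis (g (2 \<le> i) (odd i)))"
  have u: "unitary_mat 4 V" unfolding V_def
    by (rule unitary_mono) (auto simp: cis_cnj cis_mult)
  have "embed_gate n p q V = monom (2^n) (\<lambda>i. i) (\<lambda>y. cis (g (2 \<le> pcode p q y) (odd (pcode p q y))))"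
    unfolding V_def by (rule embed_mono) (use assms in auto)
  also have "\<dots> = dg n (\<lambda>b. g (b p) (b q))"
    unfolding dg_def by (rule mono_cong) (auto simp: pcode_def)
  finally show ?thesis using assms u unfolding two_qubit_gate_channel_def by metis
qed

lemma gate_cn:
  assumes "p \<noteq> q" "p < n" "q < n"
  shows "two_qubit_gate_channel n (unitary_channel (cn n p q))"
proof -
  define V where "V = monom 4 cnv (\<lambda>i. 1)"
  have u: "unitary_mat 4 V" unfolding V_def
    by (rule unitary_mono) (auto simp: cnv_def)
  have "embed_gate n p q V = monom (2^n) (cflip p q) (\<lambda>y. 1)"
    unfolding V_def
  proof (rule embed_mono)
    show "\<forall>y<2 ^ n. cflip p q y < 2 ^ n \<and> (\<forall>k<n. k \<noteq> p \<and> k \<noteq> q \<longrightarrow> bit (cflip p q y) k = bit y k) \<and>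
          pcode p q (cflip p q y) = cnv (pcode p q y)"
      using assms by (auto simp: flip_lt bit_flip bflip_def pcode_def cnv_def)
  qed (use assms in \<open>auto simp: cnv_def\<close>)
  then have "embed_gate n p q V = cn n p q" by (simp add: cn_def)
  then show ?thesis using assms u unfolding two_qubit_gate_channel_def by metis
qed


lemma conj_comp:
  assumes "A \<in> carrier_mat d d" "B \<in> carrier_mat d d" "\<rho> \<in> carrier_mat d d"
    "A' \<in> carrier_mat d d" "B' \<in> carrier_mat d d"
  shows "A * (B * \<rho> * B') * A' = (A * B) * \<rho> * (B' * A')"
proof -
  have c1: "B * \<rho> \<in> carrier_mat d d" "A * B \<in> carrier_mat d d" "B' * A' \<in> carrier_mat d d"
    using assms by auto
  have "A * (B * \<rho> * B') * A' = A * (B * \<rho> * (B' * A'))"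
    using assms c1 by (simp add: assoc_mult_mat[of _ d d _ d _ d])
  also have "\<dots> = A * (B * (\<rho> * (B' * A')))"
    using assms c1 by (simp add: assoc_mult_mat[of _ d d _ d _ d])
  also have "\<dots> = (A * B) * \<rho> * (B' * A')"
    using assms c1 by (simp add: assoc_mult_mat[of _ d d _ d _ d])
  finally show ?thesis .
qed

lemma carrier3: "A \<in> carrier_mat d d \<Longrightarrow> \<rho> \<in> carrier_mat d d \<Longrightarrow> B \<in> carrier_mat d d \<Longrightarrow> A * \<rho> * B \<in> carrier_mat d d"
  by (metis mult_carrier_mat)

lemma adj_one: "adj (1\<^sub>m d) = 1\<^sub>m d"
  by (rule eq_matI) (auto simp: adj_def)

lemma assoc5:
  assumes "X \<in> carrier_mat d d" "Y \<in> carrier_mat d d" "\<rho> \<in> carrier_mat d d" "Z \<in> carrier_mat d d"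
  shows "(X * Y) * (X * \<rho> * X) * (Z * X) = (X * Y * X) * \<rho> * (X * Z * X)"
proof -
  have "(X * Y) * (X * \<rho> * X) * (Z * X) = X * (Y * (X * (\<rho> * (X * (Z * X)))))"
    using assms by (simp add: assoc_mult_mat[of _ d d _ d _ d])
  moreover have "(X * Y * X) * \<rho> * (X * Z * X) = X * (Y * (X * (\<rho> * (X * (Z * X)))))"
    using assms by (simp add: assoc_mult_mat[of _ d d _ d _ d])
  ultimately show ?thesis by simp
qed

lemma foldr_comp: "foldr (\<circ>) gs f = foldr (\<circ>) gs id \<circ> f"
  by (induction gs) auto

lemma foldr_app2: "foldr (\<circ>) (gs1 @ gs2) id x = foldr (\<circ>) gs1 id (foldr (\<circ>) gs2 id x)"
  by (simp only: foldr_append, subst foldr_comp, simp)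

lemma foldr_sand: "foldr (\<circ>) (C # gs @ [C]) id x = C (foldr (\<circ>) gs id (C x))"
proof -
  have h: "foldr (\<circ>) gs C = foldr (\<circ>) gs id \<circ> C" by (rule foldr_comp)
  show ?thesis by (simp add: h)
qed

definition achievable :: "nat \<Rightarrow> nat \<Rightarrow> ((nat \<Rightarrow> bool) \<Rightarrow> real) \<Rightarrow> bool" where
  "achievable n k \<Phi> \<longleftrightarrow> (\<exists>gs. length gs \<le> k \<and> (\<forall>g\<in>set gs. two_qubit_gate_channel n g) \<and>
     (\<exists>c. \<forall>\<rho>\<in>carrier_mat (2^n) (2^n).
        foldr (\<circ>) gs id \<rho> = dg n (\<lambda>b. \<Phi> b + c) * \<rho> * adj (dg n (\<lambda>b. \<Phi> b + c))))"

lemma ach_mono: "achievable n k \<Phi> \<Longrightarrow> k \<le> k' \<Longrightarrow> achievable n k' \<Phi>"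
  unfolding achievable_def by (meson order_trans)

lemma ach_const: "achievable n k (\<lambda>b. a)"
proof -
  have "\<forall>\<rho>\<in>carrier_mat (2^n) (2^n). foldr (\<circ>) [] id \<rho> =
      dg n (\<lambda>b. a + (-a)) * \<rho> * adj (dg n (\<lambda>b. a + (-a)))"
    by (simp add: dg_zero adj_one)
  then show ?thesis unfolding achievable_def by (intro exI[of _ "[]"] conjI) (simp, simp, blast)
qed

lemma dg_carrier_conj: "\<rho> \<in> carrier_mat (2^n) (2^n) \<Longrightarrow> dg n \<Phi> * \<rho> * adj (dg n \<Phi>) \<in> carrier_mat (2^n) (2^n)"
  by (rule carrier3) (auto simp: adj_dg)

lemma ach_add:
  assumes "achievable n k1 \<Phi>1" "achievable n k2 \<Phi>2"
  shows "achievable n (k1 + k2) (\<lambda>b. \<Phi>1 b + \<Phi>2 b)"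
proof -
  obtain gs1 c1 where g1: "length gs1 \<le> k1" "\<forall>g\<in>set gs1. two_qubit_gate_channel n g"
    "\<forall>\<rho>\<in>carrier_mat (2^n) (2^n). foldr (\<circ>) gs1 id \<rho> = dg n (\<lambda>b. \<Phi>1 b + c1) * \<rho> * adj (dg n (\<lambda>b. \<Phi>1 b + c1))"
    using assms(1) unfolding achievable_def by blast
  obtain gs2 c2 where g2: "length gs2 \<le> k2" "\<forall>g\<in>set gs2. two_qubit_gate_channel n g"
    "\<forall>\<rho>\<in>carrier_mat (2^n) (2^n). foldr (\<circ>) gs2 id \<rho> = dg n (\<lambda>b. \<Phi>2 b + c2) * \<rho> * adj (dg n (\<lambda>b. \<Phi>2 b + c2))"
    using assms(2) unfolding achievable_def by blast
  have "\<forall>\<rho>\<in>carrier_mat (2^n) (2^n). foldr (\<circ>) (gs1 @ gs2) id \<rho> =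
     dg n (\<lambda>b. (\<Phi>1 b + \<Phi>2 b) + (c1 + c2)) * \<rho> * adj (dg n (\<lambda>b. (\<Phi>1 b + \<Phi>2 b) + (c1 + c2)))"
  proof
    fix \<rho> :: "complex mat" assume r: "\<rho> \<in> carrier_mat (2^n) (2^n)"
    have "foldr (\<circ>) (gs1 @ gs2) id \<rho> = foldr (\<circ>) gs1 id (foldr (\<circ>) gs2 id \<rho>)"
      by (rule foldr_app2)
    also have "\<dots> = dg n (\<lambda>b. \<Phi>1 b + c1) * (dg n (\<lambda>b. \<Phi>2 b + c2) * \<rho> * adj (dg n (\<lambda>b. \<Phi>2 b + c2)))
        * adj (dg n (\<lambda>b. \<Phi>1 b + c1))"
      using g1(3) g2(3) r dg_carrier_conj by simp
    also have "\<dots> = (dg n (\<lambda>b. \<Phi>1 b + c1) * dg n (\<lambda>b. \<Phi>2 b + c2)) * \<rho> *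
        (adj (dg n (\<lambda>b. \<Phi>2 b + c2)) * adj (dg n (\<lambda>b. \<Phi>1 b + c1)))"
      by (rule conj_comp) (use r in \<open>auto simp: adj_dg\<close>)
    also have "\<dots> = dg n (\<lambda>b. (\<Phi>1 b + \<Phi>2 b) + (c1 + c2)) * \<rho> * adj (dg n (\<lambda>b. (\<Phi>1 b + \<Phi>2 b) + (c1 + c2)))"
      by (simp add: adj_dg dg_mult algebra_simps)
    finally show "foldr (\<circ>) (gs1 @ gs2) id \<rho> =
     dg n (\<lambda>b. (\<Phi>1 b + \<Phi>2 b) + (c1 + c2)) * \<rho> * adj (dg n (\<lambda>b. (\<Phi>1 b + \<Phi>2 b) + (c1 + c2)))" .
  qed
  moreover have "length (gs1 @ gs2) \<le> k1 + k2" using g1 g2 by simp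
  moreover have "\<forall>g\<in>set (gs1 @ gs2). two_qubit_gate_channel n g" using g1 g2 by auto
  ultimately show ?thesis unfolding achievable_def by blast
qed

lemma ach_gate:
  assumes "p \<noteq> q" "p < n" "q < n"
  shows "achievable n 1 (\<lambda>b. g (b p) (b q))"
proof -
  have "\<forall>\<rho>\<in>carrier_mat (2^n) (2^n). foldr (\<circ>) [unitary_channel (dg n (\<lambda>b. g (b p) (b q)))] id \<rho> =
      dg n (\<lambda>b. g (b p) (b q) + 0) * \<rho> * adj (dg n (\<lambda>b. g (b p) (b q) + 0))"
    by (simp add: unitary_channel_def)
  then show ?thesis using gate_dg[OF assms, of g] unfolding achievable_def
    by (intro exI[of _ "[unitary_channel (dg n (\<lambda>b. g (b p) (b q)))]"] conjI) (simp, simp, blast)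
qed

lemma ach_cnot:
  assumes pq: "p \<noteq> q" "p < n" "q < n" and a: "achievable n k \<Phi>"
  shows "achievable n (k + 2) (\<lambda>b. \<Phi> (bflip p q b))"
proof -
  obtain gs c where g: "length gs \<le> k" "\<forall>g\<in>set gs. two_qubit_gate_channel n g"
    "\<forall>\<rho>\<in>carrier_mat (2^n) (2^n). foldr (\<circ>) gs id \<rho> = dg n (\<lambda>b. \<Phi> b + c) * \<rho> * adj (dg n (\<lambda>b. \<Phi> b + c))"
    using a unfolding achievable_def by blast
  define C where "C = unitary_channel (cn n p q)"
  define gs' where "gs' = C # gs @ [C]"
  have "\<forall>\<rho>\<in>carrier_mat (2^n) (2^n). foldr (\<circ>) gs' id \<rho> =
     dg n (\<lambda>b. \<Phi> (bflip p q b) + c) * \<rho> * adj (dg n (\<lambda>b. \<Phi> (bflip p q b) + c))"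
  proof
    fix \<rho> :: "complex mat" assume r: "\<rho> \<in> carrier_mat (2^n) (2^n)"
    have cr: "cn n p q * \<rho> * adj (cn n p q) \<in> carrier_mat (2^n) (2^n)"
      using r pq by (simp add: adj_cn carrier3)
    have "foldr (\<circ>) gs' id \<rho> = C (foldr (\<circ>) gs id (C \<rho>))"
      unfolding gs'_def by (rule foldr_sand)
    also have "\<dots> = cn n p q * (dg n (\<lambda>b. \<Phi> b + c) * (cn n p q * \<rho> * cn n p q) * adj (dg n (\<lambda>b. \<Phi> b + c)))
        * cn n p q"
      using g(3) cr pq unfolding C_def unitary_channel_def by (simp add: adj_cn)
    also have "\<dots> = (cn n p q * dg n (\<lambda>b. \<Phi> b + c)) * (cn n p q * \<rho> * cn n p q) * (adj (dg n (\<lambda>b. \<Phi> b + c)) * cn n p q)"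
      by (rule conj_comp[where d="2^n"]) (use r pq in \<open>auto simp: adj_dg carrier3\<close>)
    also have "\<dots> = (cn n p q * dg n (\<lambda>b. \<Phi> b + c) * cn n p q) * \<rho> * (cn n p q * adj (dg n (\<lambda>b. \<Phi> b + c)) * cn n p q)"
      by (rule assoc5[where d="2^n"]) (use r in \<open>auto simp: adj_dg\<close>)
    also have "\<dots> = dg n (\<lambda>b. \<Phi> (bflip p q b) + c) * \<rho> * adj (dg n (\<lambda>b. \<Phi> (bflip p q b) + c))"
      using pq by (simp add: adj_dg cn_dg_cn)
    finally show "foldr (\<circ>) gs' id \<rho> =
     dg n (\<lambda>b. \<Phi> (bflip p q b) + c) * \<rho> * adj (dg n (\<lambda>b. \<Phi> (bflip p q b) + c))" .
  qed
  moreover have "length gs' \<le> k + 2" using g by (simp add: gs'_def)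
  moreover have "\<forall>g\<in>set gs'. two_qubit_gate_channel n g"
    using g gate_cn[OF pq] by (auto simp: gs'_def C_def)
  ultimately show ?thesis unfolding achievable_def by blast
qed



definition dep :: "nat \<Rightarrow> ((nat \<Rightarrow> bool) \<Rightarrow> real) \<Rightarrow> bool" where
  "dep m \<Phi> \<longleftrightarrow> (\<forall>b b'. (\<forall>i<m. b i = b' i) \<longrightarrow> \<Phi> b = \<Phi> b')"

lemma ach_eq: "achievable n k \<Phi> \<Longrightarrow> k \<le> k' \<Longrightarrow> (\<And>b. \<Phi> b = \<Psi> b) \<Longrightarrow> achievable n k' \<Psi>"
proof -
  assume "achievable n k \<Phi>" "k \<le> k'" "\<And>b. \<Phi> b = \<Psi> b"
  moreover then have "\<Phi> = \<Psi>" by auto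
  ultimately show ?thesis using ach_mono by blast
qed

lemma dep_upd: "dep (Suc s) \<gamma> \<Longrightarrow> dep s (\<lambda>b. \<gamma> (b(s := v)))"
  unfolding dep_def
proof (intro allI impI)
  fix b b' :: "nat \<Rightarrow> bool"
  assume a: "\<forall>b b'. (\<forall>i<Suc s. b i = b' i) \<longrightarrow> \<gamma> b = \<gamma> b'" and h: "\<forall>i<s. b i = b' i"
  have "\<forall>i<Suc s. (b(s := v)) i = (b'(s := v)) i" using h by (auto simp: less_Suc_eq)
  then show "\<gamma> (b(s := v)) = \<gamma> (b'(s := v))" using a by blast
qed

lemma dep_comb:
  assumes "dep s f" "dep s g"
  shows "dep s (\<lambda>b. h (f b) (g b))"
  unfolding dep_def
proof (intro allI impI)
  fix b b' :: "nat \<Rightarrow> bool" assume h: "\<forall>i<s. b i = b' i"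
  have "f b = f b'" "g b = g b'" using assms h unfolding dep_def by blast+
  then show "h (f b) (g b) = h (f b') (g b')" by simp
qed

lemma ach_Q:
  assumes n: "2 \<le> n" and t: "t < n"
  shows "s \<le> t \<Longrightarrow> dep s \<gamma> \<Longrightarrow> achievable n (3 * 2^s - 2) (\<lambda>b. (if b t then 1 else -1) * \<gamma> b)"
proof (induction s arbitrary: \<gamma>)
  case 0
  define q' where "q' = (if t = 0 then 1 else (0::nat))"
  have q': "t \<noteq> q'" "q' < n" using n t by (auto simp: q'_def)
  have c: "\<gamma> b = \<gamma> (\<lambda>_. False)" for b using 0(2) unfolding dep_def by auto
  have g: "achievable n 1 (\<lambda>b. (if b t then 1 else -1) * \<gamma> (\<lambda>_. False))"
    using ach_gate[OF q'(1) t q'(2), of "\<lambda>u w. (if u then 1 else -1) * \<gamma> (\<lambda>_. False)"] by simp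
  show ?case
  proof (rule ach_eq[OF g])
    fix b show "(if b t then 1 else -1) * \<gamma> (\<lambda>_. False) = (if b t then 1 else - 1) * \<gamma> b"
      using c[of b] by simp
  qed simp
next
  case (Suc s)
  define A where "A = (\<lambda>b. (\<gamma> (b(s := False)) + \<gamma> (b(s := True))) / 2)"
  define B where "B = (\<lambda>b. (\<gamma> (b(s := False)) - \<gamma> (b(s := True))) / 2)"
  have dA: "dep s A" unfolding A_def
    by (rule dep_comb[OF dep_upd[OF Suc(3), of False] dep_upd[OF Suc(3), of True], of "\<lambda>x y. (x + y) / 2"])
  have dB: "dep s B" unfolding B_def
    by (rule dep_comb[OF dep_upd[OF Suc(3), of False] dep_upd[OF Suc(3), of True], of "\<lambda>x y. (x - y) / 2"])
  have st: "s < t" "s \<le> t" using Suc(2) by auto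
  have a1: "achievable n (3 * 2^s - 2) (\<lambda>b. (if b t then 1 else -1) * A b)"
    using Suc(1)[OF st(2) dA] .
  have a2: "achievable n (3 * 2^s - 2 + 2) (\<lambda>b. (if bflip s t b t then 1 else -1) * B (bflip s t b))"
    using ach_cnot[OF _ _ t Suc(1)[OF st(2) dB]] st t by simp
  have a3: "achievable n (3 * 2^s - 2 + (3 * 2^s - 2 + 2))
     (\<lambda>b. (if b t then 1 else -1) * A b + (if bflip s t b t then 1 else -1) * B (bflip s t b))"
    by (rule ach_add[OF a1 a2])
  show ?case
  proof (rule ach_eq[OF a3])
    show "3 * 2 ^ s - 2 + (3 * 2 ^ s - 2 + 2) \<le> (3 * 2 ^ Suc s - 2 :: nat)"
    proof -
      have "(2::nat) \<le> 3 * 2^s" using one_le_power[of "2::nat" s] by linarith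
      then show ?thesis by simp
    qed
  next
    fix b
    have bB: "B (bflip s t b) = B b"
    proof -
      have "\<forall>i<s. bflip s t b i = b i" using st by (simp add: bflip_def)
      then show ?thesis using dB unfolding dep_def by blast
    qed
    have ft: "bflip s t b t = (b t \<noteq> b s)" by (simp add: bflip_def)
    show "(if b t then 1 else -1) * A b + (if bflip s t b t then 1 else -1) * B (bflip s t b) =
          (if b t then 1 else -1) * \<gamma> b"
    proof (cases "b s")
      case True
      then have e: "\<gamma> (b(s := True)) = \<gamma> b" using fun_upd_triv[of b s] by simp
      show ?thesis unfolding bB ft unfolding A_def B_def using True by (cases "b t") (simp_all add: e field_simps)
    next
      case False
      then have e: "\<gamma> (b(s := False)) = \<gamma> b" using fun_upd_triv[of b s] by simp
      show ?thesis unfolding bB ft unfolding A_def B_def using False by (cases "b t") (simp_all add: e field_simps)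
    qed
  qed
qed

lemma ach_P:
  assumes n: "2 \<le> n"
  shows "m \<le> n \<Longrightarrow> dep m \<Psi> \<Longrightarrow> achievable n (3 * 2^m) \<Psi>"
proof (induction m arbitrary: \<Psi>)
  case 0
  have c: "\<Psi> b = \<Psi> (\<lambda>_. False)" for b using 0(2) unfolding dep_def by auto
  show ?case
  proof (rule ach_eq[OF ach_const[of n 0]])
    fix b show "\<Psi> (\<lambda>_. False) = \<Psi> b" using c[of b] by simp
  qed simp
next
  case (Suc m)
  define \<psi>0 where "\<psi>0 = (\<lambda>b. \<Psi> (b(m := False)))"
  define \<beta> where "\<beta> = (\<lambda>b. (\<Psi> (b(m := True)) - \<Psi> (b(m := False))) / 2)"
  have d0: "dep m (\<lambda>b. \<psi>0 b + \<beta> b)" unfolding \<psi>0_def \<beta>_def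
    by (rule dep_comb[OF dep_upd[OF Suc(3), of False] dep_upd[OF Suc(3), of True], of "\<lambda>x y. x + (y - x) / 2"])
  have d1: "dep m \<beta>" unfolding \<beta>_def
    by (rule dep_comb[OF dep_upd[OF Suc(3), of False] dep_upd[OF Suc(3), of True], of "\<lambda>x y. (y - x) / 2"])
  have m: "m < n" "m \<le> m" using Suc(2) by auto
  have a1: "achievable n (3 * 2^m) (\<lambda>b. \<psi>0 b + \<beta> b)" using Suc(1)[OF _ d0] m by simp
  have a2: "achievable n (3 * 2^m - 2) (\<lambda>b. (if b m then 1 else -1) * \<beta> b)"
    by (rule ach_Q[OF n m(1) m(2) d1])
  show ?case
  proof (rule ach_eq[OF ach_add[OF a1 a2]])
    show "3 * 2 ^ m + (3 * 2 ^ m - 2) \<le> (3 * 2 ^ Suc m :: nat)" by simp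
  next
    fix b
    show "\<psi>0 b + \<beta> b + (if b m then 1 else -1) * \<beta> b = \<Psi> b"
    proof (cases "b m")
      case True
      then have "b(m := True) = b" using fun_upd_triv[of b m] by simp
      then show ?thesis using True unfolding \<psi>0_def \<beta>_def by (auto simp: field_simps)
    next
      case False
      then have "b(m := False) = b" using fun_upd_triv[of b m] by simp
      then show ?thesis using False unfolding \<psi>0_def \<beta>_def by (auto simp: field_simps)
    qed
  qed
qed



lemma dg_conj_entry:
  assumes r: "\<rho> \<in> carrier_mat (2^n) (2^n)" and a: "a < 2^n" and b: "b < 2^n"
  shows "(dg n \<phi> * \<rho> * adj (dg n \<phi>)) $$ (a, b) = cis (\<phi> (bit a)) * \<rho> $$ (a, b) * cnj (cis (\<phi> (bit b)))"
proof -
  have c1: "dg n \<phi> * \<rho> \<in> carrier_mat (2^n) (2^n)" by (rule mult_carrier_mat[OF dg_carrier r])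
  have ad: "adj (dg n \<phi>) \<in> carrier_mat (2^n) (2^n)" by (simp add: adj_dg)
  have e1: "(dg n \<phi> * \<rho>) $$ (a, k) = cis (\<phi> (bit a)) * \<rho> $$ (a, k)" if k: "k < 2^n" for k
  proof -
    have "(dg n \<phi> * \<rho>) $$ (a, k) = (\<Sum>l<2^n. dg n \<phi> $$ (a, l) * \<rho> $$ (l, k))"
      by (rule mult_entry[OF dg_carrier r a k])
    also have "\<dots> = (\<Sum>l<2^n. if l = a then cis (\<phi> (bit a)) * \<rho> $$ (a, k) else 0)"
      by (rule sum.cong) (auto simp: dg_def monom_def a)
    also have "\<dots> = cis (\<phi> (bit a)) * \<rho> $$ (a, k)" using a by simp
    finally show ?thesis .
  qed
  have adjE: "adj (dg n \<phi>) $$ (k, b) = (if k = b then cnj (cis (\<phi> (bit b))) else 0)" if "k < 2^n" for k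
    using that b unfolding adj_dg by (simp add: dg_def monom_def cis_cnj)
  have "(dg n \<phi> * \<rho> * adj (dg n \<phi>)) $$ (a, b) = (\<Sum>k<2^n. (dg n \<phi> * \<rho>) $$ (a, k) * adj (dg n \<phi>) $$ (k, b))"
    by (rule mult_entry[OF c1 ad a b])
  also have "\<dots> = (\<Sum>k<2^n. if k = b then cis (\<phi> (bit a)) * \<rho> $$ (a, b) * cnj (cis (\<phi> (bit b))) else 0)"
    by (rule sum.cong) (auto simp: e1 adjE)
  also have "\<dots> = cis (\<phi> (bit a)) * \<rho> $$ (a, b) * cnj (cis (\<phi> (bit b)))" using b by simp
  finally show ?thesis .
qed

lemma ketbra_carrier[simp]: "ketbra d i j \<in> carrier_mat d d"
  by (simp add: ketbra_def)

lemma div_mod_lt: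
  fixes X D :: nat
  assumes "X < D * D"
  shows "X div D < D" "X mod D < D"
proof -
  show "X div D < D" using assms by (simp add: less_mult_imp_div_less)
  show "X mod D < D" using assms by (metis mod_less_divisor mult_0_right not_gr_zero not_less0)
qed

lemma double_delta:
  assumes a: "a < (D::nat)" and b: "b < D"
  shows "(\<Sum>i<D. \<Sum>j<D. if i = a then if j = b then f i j else 0 else 0) = f a b"
proof -
  have "(\<Sum>j<D. if i = a then if j = b then f i j else 0 else 0) = (if i = a then f i b else 0)" for i
    using b by (cases "i = a") (simp_all add: sum.delta)
  then show ?thesis using a by (simp add: sum.delta)
qed

lemma choi_dg:
  assumes N: "\<forall>\<rho>\<in>carrier_mat (2^n) (2^n). \<N> \<rho> = dg n \<phi> * \<rho> * adj (dg n \<phi>)"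
  shows "choi n \<N> = mat (2^n * 2^n) (2^n * 2^n) (\<lambda>(X, Y).
     (if X div 2^n = X mod 2^n then cis (\<phi> (bit (X mod 2^n))) else 0) *
     cnj (if Y div 2^n = Y mod 2^n then cis (\<phi> (bit (Y mod 2^n))) else 0))"
proof (rule eq_matI)
  let ?D = "2^n :: nat"
  fix X Y assume "X < dim_row (mat (2^n * 2^n) (2^n * 2^n) (\<lambda>(X, Y).
     (if X div 2^n = X mod 2^n then cis (\<phi> (bit (X mod 2^n))) else 0) *
     cnj (if Y div 2^n = Y mod 2^n then cis (\<phi> (bit (Y mod 2^n))) else 0)))"
    "Y < dim_col (mat (2^n * 2^n) (2^n * 2^n) (\<lambda>(X, Y).
     (if X div 2^n = X mod 2^n then cis (\<phi> (bit (X mod 2^n))) else 0) *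
     cnj (if Y div 2^n = Y mod 2^n then cis (\<phi> (bit (Y mod 2^n))) else 0)))"
  then have X: "X < ?D * ?D" and Y: "Y < ?D * ?D" by auto
  note dX = div_mod_lt[OF X] and dY = div_mod_lt[OF Y]
  have ent: "kron (ketbra ?D i j) (\<N> (ketbra ?D i j)) $$ (X, Y) =
      (if i = X div ?D then (if j = Y div ?D then
         (if X mod ?D = i \<and> Y mod ?D = j then cis (\<phi> (bit i)) * cnj (cis (\<phi> (bit j))) else 0) else 0) else 0)"
    if i: "i < ?D" and j: "j < ?D" for i j
  proof -
    have Nk: "\<N> (ketbra ?D i j) = dg n \<phi> * ketbra ?D i j * adj (dg n \<phi>)" using N by simp
    have dims: "dim_row (\<N> (ketbra ?D i j)) = ?D" "dim_col (\<N> (ketbra ?D i j)) = ?D"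
      unfolding Nk adj_dg by (simp_all add: dg_def monom_def)
    have "kron (ketbra ?D i j) (\<N> (ketbra ?D i j)) $$ (X, Y) =
        ketbra ?D i j $$ (X div ?D, Y div ?D) * \<N> (ketbra ?D i j) $$ (X mod ?D, Y mod ?D)"
      unfolding kron_def using X Y dims by (simp add: ketbra_def)
    also have "\<dots> = ketbra ?D i j $$ (X div ?D, Y div ?D) *
        (cis (\<phi> (bit (X mod ?D))) * ketbra ?D i j $$ (X mod ?D, Y mod ?D) * cnj (cis (\<phi> (bit (Y mod ?D)))))"
      unfolding Nk by (subst dg_conj_entry) (use dX dY in auto)
    also have "\<dots> = (if i = X div ?D then (if j = Y div ?D then
         (if X mod ?D = i \<and> Y mod ?D = j then cis (\<phi> (bit i)) * cnj (cis (\<phi> (bit j))) else 0) else 0) else 0)"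
      using dX dY by (auto simp: ketbra_def)
    finally show ?thesis .
  qed
  have "choi n \<N> $$ (X, Y) = (\<Sum>i<?D. \<Sum>j<?D. kron (ketbra ?D i j) (\<N> (ketbra ?D i j)) $$ (X, Y))"
    unfolding choi_def qdim_def using X Y by simp
  also have "\<dots> = (\<Sum>i<?D. \<Sum>j<?D. (if i = X div ?D then (if j = Y div ?D then
         (if X mod ?D = i \<and> Y mod ?D = j then cis (\<phi> (bit i)) * cnj (cis (\<phi> (bit j))) else 0) else 0) else 0))"
    by (intro sum.cong refl) (simp add: ent)
  also have "\<dots> = (if X mod ?D = X div ?D \<and> Y mod ?D = Y div ?D then
      cis (\<phi> (bit (X div ?D))) * cnj (cis (\<phi> (bit (Y div ?D)))) else 0)"
    using dX dY by (subst double_delta) auto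
  also have "\<dots> = (if X div 2^n = X mod 2^n then cis (\<phi> (bit (X mod 2^n))) else 0) *
     cnj (if Y div 2^n = Y mod 2^n then cis (\<phi> (bit (Y mod 2^n))) else 0)"
    by auto
  finally show "choi n \<N> $$ (X, Y) = mat (2^n * 2^n) (2^n * 2^n) (\<lambda>(X, Y).
     (if X div 2^n = X mod 2^n then cis (\<phi> (bit (X mod 2^n))) else 0) *
     cnj (if Y div 2^n = Y mod 2^n then cis (\<phi> (bit (Y mod 2^n))) else 0)) $$ (X, Y)"
    using X Y by simp
qed (auto simp: choi_def qdim_def)


definition wv :: "nat \<Rightarrow> nat \<Rightarrow> nat \<Rightarrow> complex" where
  "wv D x X = (if X = 0 \<or> X = x * D + x then 1/2 else 0)"

definition testop :: "nat \<Rightarrow> nat \<Rightarrow> complex mat" where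
  "testop n x = mat (2^n * 2^n) (2^n * 2^n) (\<lambda>(X, Y). wv (2^n) x X * wv (2^n) x Y)"

lemma sum_two:
  fixes h :: "nat \<Rightarrow> complex"
  assumes "X0 \<noteq> X1" "X0 < M" "X1 < M"
  shows "(\<Sum>X<M. (if X = X0 \<or> X = X1 then c else 0) * h X) = c * (h X0 + h X1)"
proof -
  have "(\<Sum>X<M. (if X = X0 \<or> X = X1 then c else 0) * h X) =
        (\<Sum>X<M. (if X = X0 then c * h X0 else 0) + (if X = X1 then c * h X1 else 0))"
    by (rule sum.cong) (use assms in auto)
  also have "\<dots> = c * h X0 + c * h X1" using assms by (simp add: sum.distrib)
  finally show ?thesis by (simp add: algebra_simps)
qed

lemma X1_facts:
  fixes x D :: nat
  assumes "0 < x" "x < D"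
  shows "x * D + x < D * D" "(x * D + x) div D = x" "(x * D + x) mod D = x" "x * D + x \<noteq> 0" "0 < D * D"
proof -
  have "x * D + x \<le> (D - 1) * D + (D - 1)" using assms by (intro add_mono mult_right_mono) auto
  also have "\<dots> < D * D" using assms by (cases D) (auto simp: algebra_simps)
  finally show "x * D + x < D * D" .
  show "(x * D + x) div D = x" "(x * D + x) mod D = x" using assms by auto
  show "x * D + x \<noteq> 0" "0 < D * D" using assms by auto
qed

lemma cnj_mult_self: "cnj z * z = complex_of_real (Re z ^ 2 + Im z ^ 2)"
  using complex_mult_cnj[of z] by (simp add: mult.commute)

lemma re_cnj_mult_self: "Re (cnj z * z) = (cmod z)^2"
  using cmod_power2[of z] by (simp add: power2_eq_square)

lemma test_value_dg:
  assumes x: "0 < x" "x < 2^n"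
    and N: "\<forall>\<rho>\<in>carrier_mat (2^n) (2^n). \<N> \<rho> = dg n \<phi> * \<rho> * adj (dg n \<phi>)"
  shows "test_value n (testop n x) \<N> = (cmod ((cis (\<phi> (bit (0::nat))) + cis (\<phi> (bit x))) / 2))^2"
proof -
  let ?D = "2^n :: nat"
  let ?M = "?D * ?D"
  define g where "g X = (if X div ?D = X mod ?D then cis (\<phi> (bit (X mod ?D))) else 0)" for X
  have C: "choi n \<N> = mat ?M ?M (\<lambda>(X, Y). g X * cnj (g Y))"
    unfolding g_def by (rule choi_dg[OF N])
  note F = X1_facts[OF x]
  define s where "s = (cis (\<phi> (bit (0::nat))) + cis (\<phi> (bit x))) / 2"
  have g0: "g 0 = cis (\<phi> (bit (0::nat)))" unfolding g_def by simp
  have g1: "g (x * ?D + x) = cis (\<phi> (bit x))" unfolding g_def using F by simp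
  have wv: "wv ?D x X = (if X = 0 \<or> X = x * ?D + x then 1/2 else 0)" for X by (simp add: wv_def)
  have s1: "(\<Sum>Y<?M. wv ?D x Y * g Y) = 1/2 * (g 0 + g (x * ?D + x))"
    unfolding wv by (rule sum_two) (use F in auto)
  have s1: "(\<Sum>Y<?M. wv ?D x Y * g Y) = s"
    using g0 g1 unfolding s1 s_def by simp
  have s2: "(\<Sum>X<?M. wv ?D x X * cnj (g X)) = 1/2 * (cnj (g 0) + cnj (g (x * ?D + x)))"
    unfolding wv by (rule sum_two) (use F in auto)
  have s2: "(\<Sum>X<?M. wv ?D x X * cnj (g X)) = cnj s"
    using g0 g1 unfolding s2 s_def by simp
  have Ec: "testop n x \<in> carrier_mat ?M ?M" by (simp add: testop_def)
  have Cc: "choi n \<N> \<in> carrier_mat ?M ?M" by (simp add: C)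
  have "mtrace (testop n x * choi n \<N>) = (\<Sum>X<?M. (testop n x * choi n \<N>) $$ (X, X))"
    unfolding mtrace_def using Ec by simp
  also have "\<dots> = (\<Sum>X<?M. \<Sum>Y<?M. testop n x $$ (X, Y) * choi n \<N> $$ (Y, X))"
    by (rule sum.cong[OF refl], rule mult_entry[OF Ec Cc]) auto
  also have "\<dots> = (\<Sum>X<?M. \<Sum>Y<?M. (wv ?D x X * cnj (g X)) * (wv ?D x Y * g Y))"
    by (intro sum.cong refl) (simp add: testop_def C)
  also have "\<dots> = (\<Sum>X<?M. wv ?D x X * cnj (g X)) * (\<Sum>Y<?M. wv ?D x Y * g Y)"
    by (simp add: sum_product)
  also have "\<dots> = cnj s * s" by (simp add: s1 s2)
  finally have "mtrace (testop n x * choi n \<N>) = cnj s * s" .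
  then show ?thesis unfolding test_value_def s_def by (simp only: re_cnj_mult_self)
qed


lemma cnj_mult_norm: "cnj z * z = complex_of_real ((cmod z)^2)"
proof (rule complex_eqI)
  show "Re (cnj z * z) = Re (complex_of_real ((cmod z)^2))"
    using re_cnj_mult_self[of z] by (simp only: Re_complex_of_real)
  show "Im (cnj z * z) = Im (complex_of_real ((cmod z)^2))" by (simp add: algebra_simps)
qed

definition qf :: "nat \<Rightarrow> complex mat \<Rightarrow> (nat \<Rightarrow> complex) \<Rightarrow> complex" where
  "qf d A v = (\<Sum>i<d. \<Sum>j<d. cnj (v i) * A $$ (i, j) * v j)"

lemma psdI:
  assumes "A \<in> carrier_mat d d" "\<And>v. \<exists>r\<ge>0. qf d A v = complex_of_real r"
  shows "psd d A"
  unfolding psd_def Let_def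
proof (intro conjI allI assms(1))
  fix v :: "nat \<Rightarrow> complex"
  obtain r where "r \<ge> 0" "qf d A v = complex_of_real r" using assms(2) by blast
  then show "Im (\<Sum>i<d. \<Sum>j<d. cnj (v i) * A $$ (i, j) * v j) = 0"
    "0 \<le> Re (\<Sum>i<d. \<Sum>j<d. cnj (v i) * A $$ (i, j) * v j)" unfolding qf_def by auto
qed

definition sig :: "nat \<Rightarrow> nat \<Rightarrow> complex mat" where
  "sig n x = mat (2^n) (2^n) (\<lambda>(a, b). if a = b \<and> (a = 0 \<or> a = x) then 1/2 else 0)"

lemma wv_real: "cnj (wv D x X) = wv D x X"
  by (simp add: wv_def)

lemma qf_testop:
  "qf (2^n * 2^n) (testop n x) v = complex_of_real ((cmod (\<Sum>j<2^n * 2^n. wv (2^n) x j * v j))^2)"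
proof -
  let ?M = "2^n * 2^n :: nat"
  let ?S = "\<Sum>j<?M. wv (2^n) x j * v j"
  have "qf ?M (testop n x) v = (\<Sum>i<?M. \<Sum>j<?M. (cnj (v i) * wv (2^n) x i) * (wv (2^n) x j * v j))"
    unfolding qf_def testop_def by (intro sum.cong refl) (simp add: algebra_simps)
  also have "\<dots> = (\<Sum>i<?M. cnj (v i) * wv (2^n) x i) * ?S" by (simp add: sum_product)
  also have "(\<Sum>i<?M. cnj (v i) * wv (2^n) x i) = cnj ?S"
    by (simp add: cnj_sum wv_real mult.commute)
  finally have "qf ?M (testop n x) v = cnj ?S * ?S" .
  also have "\<dots> = complex_of_real ((cmod ?S)^2)"
    by (rule cnj_mult_norm)
  finally show ?thesis .
qed

lemma sig_qf:
  assumes "x < 2^n"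
  shows "qf (2^n) (sig n x) v = complex_of_real (\<Sum>a<2^n. if a = 0 \<or> a = x then (cmod (v a))^2 / 2 else 0)"
proof -
  have "qf (2^n) (sig n x) v = (\<Sum>a<2^n. \<Sum>b<2^n. if b = a then (if a = 0 \<or> a = x then cnj (v a) * v a / 2 else 0) else 0)"
    unfolding qf_def sig_def by (intro sum.cong refl) auto
  also have "\<dots> = (\<Sum>a<2^n. if a = 0 \<or> a = x then cnj (v a) * v a / 2 else 0)"
    by (simp add: sum.delta)
  also have "\<dots> = (\<Sum>a<2^n. complex_of_real (if a = 0 \<or> a = x then (cmod (v a))^2 / 2 else 0))"
    by (intro sum.cong refl) (simp add: cnj_mult_norm)
  finally show ?thesis by simp
qed

lemma density_sig:
  assumes "0 < x" "x < 2^n"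
  shows "density_op (2^n) (sig n x)"
  unfolding density_op_def
proof
  show "psd (2^n) (sig n x)"
  proof (rule psdI)
    show "sig n x \<in> carrier_mat (2^n) (2^n)" by (simp add: sig_def)
    fix v show "\<exists>r\<ge>0. qf (2^n) (sig n x) v = complex_of_real r"
      by (rule exI, rule conjI[OF _ sig_qf[OF assms(2)]]) (auto intro: sum_nonneg)
  qed
  have "mtrace (sig n x) = (\<Sum>a<2^n. (if a = 0 \<or> a = x then 1/2 else 0) * 1)"
    unfolding mtrace_def sig_def by (intro sum.cong refl) auto
  also have "\<dots> = 1/2 * (1 + 1)"
    by (rule sum_two) (use assms in auto)
  finally show "mtrace (sig n x) = 1" by simp
qed


lemma kron_sig_entry:
  assumes X: "X < 2^n * 2^n" and Y: "Y < 2^n * 2^n"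
  shows "kron (sig n x) (1\<^sub>m (2^n)) $$ (X, Y) =
    (if X = Y \<and> (X div 2^n = 0 \<or> X div 2^n = x) then 1/2 else 0)"
proof -
  let ?D = "2^n :: nat"
  note dX = div_mod_lt[OF X] and dY = div_mod_lt[OF Y]
  have eq: "X = Y \<longleftrightarrow> X div ?D = Y div ?D \<and> X mod ?D = Y mod ?D"
    by (metis div_mult_mod_eq)
  have "kron (sig n x) (1\<^sub>m ?D) $$ (X, Y) = sig n x $$ (X div ?D, Y div ?D) * 1\<^sub>m ?D $$ (X mod ?D, Y mod ?D)"
    unfolding kron_def using X Y by (simp add: sig_def)
  also have "\<dots> = (if X = Y \<and> (X div 2^n = 0 \<or> X div 2^n = x) then 1/2 else 0)"
    using dX dY eq by (auto simp: sig_def)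
  finally show ?thesis .
qed

lemma qf_K:
  "qf (2^n * 2^n) (kron (sig n x) (1\<^sub>m (2^n))) v =
     complex_of_real (\<Sum>X<2^n * 2^n. if X div 2^n = 0 \<or> X div 2^n = x then (cmod (v X))^2 / 2 else 0)"
proof -
  let ?M = "2^n * 2^n :: nat"
  have "qf ?M (kron (sig n x) (1\<^sub>m (2^n))) v = (\<Sum>X<?M. \<Sum>Y<?M. if Y = X then
       (if X div 2^n = 0 \<or> X div 2^n = x then cnj (v X) * v X / 2 else 0) else 0)"
    unfolding qf_def by (intro sum.cong refl) (auto simp: kron_sig_entry)
  also have "\<dots> = (\<Sum>X<?M. if X div 2^n = 0 \<or> X div 2^n = x then cnj (v X) * v X / 2 else 0)"
    by (simp add: sum.delta)
  also have "\<dots> = (\<Sum>X<?M. complex_of_real (if X div 2^n = 0 \<or> X div 2^n = x then (cmod (v X))^2 / 2 else 0))"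
    by (intro sum.cong refl) (simp add: cnj_mult_norm)
  finally show ?thesis by simp
qed

lemma norm_sum_sq: "(cmod ((a + b) / 2))^2 \<le> ((cmod a)^2 + (cmod b)^2) / 2"
proof -
  have "cmod ((a + b) / 2) \<le> (cmod a + cmod b) / 2"
    using norm_triangle_ineq[of a b] by (simp add: norm_divide)
  then have "(cmod ((a + b) / 2))^2 \<le> ((cmod a + cmod b) / 2)^2"
    by (intro power_mono) auto
  also have "\<dots> \<le> ((cmod a)^2 + (cmod b)^2) / 2"
  proof -
    have "((cmod a)^2 + (cmod b)^2) / 2 - ((cmod a + cmod b) / 2)^2 = ((cmod a - cmod b) / 2)^2"
      by (simp add: power2_eq_square field_simps)
    moreover have "((cmod a - cmod b) / 2)^2 \<ge> 0" by simp
    ultimately show ?thesis by linarith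
  qed
  finally show ?thesis .
qed

lemma channel_test_testop:
  assumes x: "0 < x" "x < 2^n"
  shows "channel_test n (testop n x)"
  unfolding channel_test_def qdim_def
proof (intro conjI exI)
  let ?D = "2^n :: nat"
  let ?M = "2^n * 2^n :: nat"
  note F = X1_facts[OF x]
  have Ec: "testop n x \<in> carrier_mat ?M ?M" by (simp add: testop_def)
  have dE: "dim_row (testop n x) = ?M" "dim_col (testop n x) = ?M" by (simp_all add: testop_def)
  show "psd ?M (testop n x)"
  proof (rule psdI[OF Ec])
    fix v show "\<exists>r\<ge>0. qf ?M (testop n x) v = complex_of_real r"
      by (rule exI[of _ "(cmod (\<Sum>j<?M. wv ?D x j * v j))^2"]) (simp add: qf_testop)
  qed
  show "density_op ?D (sig n x)" by (rule density_sig[OF x])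
  show "psd ?M (kron (sig n x) (1\<^sub>m ?D) - testop n x)"
  proof (rule psdI)
    show "kron (sig n x) (1\<^sub>m ?D) - testop n x \<in> carrier_mat ?M ?M"
      unfolding carrier_mat_def mem_Collect_eq index_minus_mat(2,3) dE by simp
    fix v
    define f where "f X = (if X div 2^n = 0 \<or> X div 2^n = x then (cmod (v X))^2 / 2 else 0)" for X
    define S where "S = (\<Sum>j<?M. wv ?D x j * v j)"
    have "qf ?M (kron (sig n x) (1\<^sub>m ?D) - testop n x) v =
        qf ?M (kron (sig n x) (1\<^sub>m ?D)) v - qf ?M (testop n x) v"
    proof -
      have "qf ?M (kron (sig n x) (1\<^sub>m ?D) - testop n x) v =
        (\<Sum>i<?M. \<Sum>j<?M. cnj (v i) * kron (sig n x) (1\<^sub>m ?D) $$ (i, j) * v j - cnj (v i) * testop n x $$ (i, j) * v j)"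
        unfolding qf_def by (intro sum.cong refl) (simp add: dE right_diff_distrib left_diff_distrib)
      then show ?thesis unfolding qf_def by (simp only: sum_subtractf)
    qed
    also have "\<dots> = complex_of_real (sum f {..<?M} - (cmod S)^2)"
      unfolding qf_K qf_testop f_def S_def by simp
    finally have eq: "qf ?M (kron (sig n x) (1\<^sub>m ?D) - testop n x) v = complex_of_real (sum f {..<?M} - (cmod S)^2)" .
    have S: "S = (v 0 + v (x * ?D + x)) / 2"
      unfolding S_def wv_def by (subst sum_two) (use F in auto)
    have "sum f {0, x * ?D + x} \<le> sum f {..<?M}"
      by (rule sum_mono2) (use F in \<open>auto simp: f_def\<close>)
    moreover have "sum f {0, x * ?D + x} = ((cmod (v 0))^2 + (cmod (v (x * ?D + x)))^2) / 2"
      using F by (simp add: f_def field_simps)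
    moreover have "(cmod S)^2 \<le> ((cmod (v 0))^2 + (cmod (v (x * ?D + x)))^2) / 2"
      unfolding S by (rule norm_sum_sq)
    ultimately have "sum f {..<?M} - (cmod S)^2 \<ge> 0" by linarith
    then show "\<exists>r\<ge>0. qf ?M (kron (sig n x) (1\<^sub>m ?D) - testop n x) v = complex_of_real r"
      using eq by blast
  qed
qed



definition vl :: "real \<Rightarrow> real" where
  "vl p = (if p \<le> 1/2 then 1 else 0)"

primrec Hs :: "(history \<Rightarrow> complex mat \<Rightarrow> real) \<Rightarrow> (nat \<Rightarrow> complex mat) \<Rightarrow> nat \<Rightarrow> history" where
  "Hs L E 0 = []"
| "Hs L E (Suc j) = Hs L E j @ [(E j, vl (L (Hs L E j) (E j)))]"

lemma length_Hs[simp]: "length (Hs L E j) = j"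
  by (induction j) auto

lemma vl_far: "\<epsilon> < 1/2 \<Longrightarrow> \<bar>p - vl p\<bar> > \<epsilon>"
  by (simp add: vl_def)

lemma choose_m:
  assumes "6 \<le> (G::nat)" "1 \<le> n"
  shows "\<exists>m. 1 \<le> m \<and> m \<le> n \<and> 3 * 2^m \<le> G \<and> (m = n \<or> G < 3 * 2^(Suc m))"
proof -
  define Ms where "Ms = {m. m \<le> n \<and> 3 * 2^m \<le> G}"
  have fin: "finite Ms" unfolding Ms_def by simp
  have one: "1 \<in> Ms" using assms unfolding Ms_def by simp
  define m where "m = Max Ms"
  have mM: "m \<in> Ms" unfolding m_def using fin one by (intro Max_in) auto
  have m1: "1 \<le> m" unfolding m_def using fin one by (simp add: Max_ge)
  have "m = n \<or> G < 3 * 2^(Suc m)"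
  proof (rule ccontr)
    assume "\<not> (m = n \<or> G < 3 * 2^(Suc m))"
    then have "Suc m \<in> Ms" using mM unfolding Ms_def by auto
    then have "Suc m \<le> m" unfolding m_def using fin by (simp add: Max_ge)
    then show False by simp
  qed
  then show ?thesis using mM m1 unfolding Ms_def by auto
qed

lemma bits_low_eq:
  fixes x y :: nat
  assumes "x < 2^m" "y < 2^m"
  shows "(\<forall>i<m. bit x i = bit y i) \<longleftrightarrow> x = y"
  using bits_eq_imp_eq[OF assms] by auto

lemma val_phase:
  fixes c a :: real
  shows "a = 0 \<Longrightarrow> (cmod ((cis (0 + c) + cis (a + c)) / 2))^2 = 1"
    and "a = pi \<Longrightarrow> (cmod ((cis (0 + c) + cis (a + c)) / 2))^2 = 0"
proof -
  assume "a = 0"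
  then show "(cmod ((cis (0 + c) + cis (a + c)) / 2))^2 = 1" by (simp add: norm_divide)
next
  assume "a = pi"
  then have "cis (a + c) = - cis c" by (simp add: cis_mult[symmetric] cis_pi)
  then show "(cmod ((cis (0 + c) + cis (a + c)) / 2))^2 = 0" by simp
qed


theorem corollary4p5:
  fixes \<epsilon> :: real
  assumes "\<epsilon> < 1 / 2"
  shows "\<exists>c > 0. \<exists>n0 G0. \<forall>n \<ge> n0. \<forall>G \<ge> G0.
           \<forall>L :: history \<Rightarrow> complex mat \<Rightarrow> real.
             (\<forall>h E. 0 \<le> L h E \<and> L h E \<le> 1) \<longrightarrow>
             (\<exists>\<N> \<in> gate_class n G. \<exists>A :: history \<Rightarrow> complex mat.
                (\<forall>h. channel_test n (A h)) \<and>
                (\<exists>T. real (eps_mistakes n L A \<N> \<epsilon> T) \<ge> c * min (2 ^ n) (sqrt (real G))))"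
proof (rule exI[of _ "1/12"], rule conjI, simp, rule exI[of _ "2"], rule exI[of _ "6"], intro allI impI)
  fix n G :: nat and L :: "history \<Rightarrow> complex mat \<Rightarrow> real"
  assume n: "2 \<le> n" and G: "6 \<le> G" and "\<forall>h E. 0 \<le> L h E \<and> L h E \<le> 1"
  obtain m where m: "1 \<le> m" "m \<le> n" "3 * 2^m \<le> G" "m = n \<or> G < 3 * 2^(Suc m)"
    using choose_m[OF G, of n] n by fastforce
  define k where "k = 2^m - (1::nat)"
  have p2: "(2::nat)^1 \<le> 2^m" by (rule power_increasing[OF m(1)]) simp
  have k1: "1 \<le> k" using p2 unfolding k_def by simp
  have km: "k < 2^m" unfolding k_def by simp
  have mn: "(2::nat)^m \<le> 2^n" using m(2) by (simp add: power_increasing)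
  define xs where "xs j = j mod k + 1" for j
  have xs: "0 < xs j" "xs j < 2^m" "xs j < 2^n" for j
  proof -
    have "j mod k < k" using k1 by simp
    then show "0 < xs j" "xs j < 2^m" using km unfolding xs_def by auto
    then show "xs j < 2^n" using mn by linarith
  qed
  define E where "E j = testop n (xs j)" for j
  define A where "A h = E (length h)" for h :: history
  define v where "v j = vl (L (Hs L E j) (E j))" for j
  define S where "S = {y. \<exists>j<k. y = j + 1 \<and> v j = 0}"
  define \<Phi> where "\<Phi> b = (if \<exists>y\<in>S. \<forall>i<m. b i = bit y i then pi else 0)" for b :: "nat \<Rightarrow> bool"
  have S_lt: "y \<in> S \<Longrightarrow> 0 < y \<and> y < 2^m" for y using km unfolding S_def by auto
  have dep: "dep m \<Phi>" unfolding dep_def \<Phi>_def by auto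
  have ach: "achievable n (3 * 2^m) \<Phi>" by (rule ach_P[OF n m(2) dep])
  then obtain gs c where gs: "length gs \<le> 3 * 2^m" "\<forall>g\<in>set gs. two_qubit_gate_channel n g"
    "\<forall>\<rho>\<in>carrier_mat (2^n) (2^n). foldr (\<circ>) gs id \<rho> = dg n (\<lambda>b. \<Phi> b + c) * \<rho> * adj (dg n (\<lambda>b. \<Phi> b + c))"
    unfolding achievable_def by blast
  define \<N> where "\<N> = foldr (\<circ>) gs id"
  have NG: "\<N> \<in> gate_class n G" unfolding gate_class_def \<N>_def using gs m(3) by auto
  have \<Phi>0: "\<Phi> (bit (0::nat)) = 0"
  proof -
    have "\<not> (\<forall>i<m. bit (0::nat) i = bit y i)" if "y \<in> S" for y
      using S_lt[OF that] bits_low_eq[of 0 m y] by auto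
    then show ?thesis unfolding \<Phi>_def by auto
  qed
  have \<Phi>x: "\<Phi> (bit (j + 1)) = (if v j = 0 then pi else 0)" if j: "j < k" for j
  proof -
    have jm: "j + 1 < 2^m" using j km by simp
    have "(\<exists>y\<in>S. \<forall>i<m. bit (j + 1) i = bit y i) \<longleftrightarrow> (j + 1) \<in> S"
      using S_lt bits_low_eq[OF jm] by blast
    also have "\<dots> \<longleftrightarrow> v j = 0" unfolding S_def using j by auto
    finally show ?thesis unfolding \<Phi>_def by simp
  qed
  have tv: "test_value n (E j) \<N> = v j" if j: "j < k" for j
  proof -
    have xj: "xs j = j + 1" unfolding xs_def using j by simp
    have "test_value n (E j) \<N> = (cmod ((cis (\<Phi> (bit (0::nat)) + c) + cis (\<Phi> (bit (xs j)) + c)) / 2))^2"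
      unfolding E_def by (rule test_value_dg[OF xs(1) xs(3)]) (use gs(3) in \<open>simp add: \<N>_def\<close>)
    also have "\<dots> = (cmod ((cis (0 + c) + cis (\<Phi> (bit (j + 1)) + c)) / 2))^2" by (simp only: \<Phi>0 xj)
    also have "\<dots> = v j"
    proof (cases "v j = 0")
      case True then show ?thesis using \<Phi>x[OF j] val_phase(2) by simp
    next
      case False
      then have "v j = 1" unfolding v_def vl_def by (auto split: if_splits)
      then show ?thesis using \<Phi>x[OF j] val_phase(1) False by simp
    qed
    finally show ?thesis .
  qed
  have hist: "t \<le> k \<Longrightarrow> hist n A \<N> t = Hs L E t" for t
  proof (induction t)
    case 0 then show ?case by simp
  next
    case (Suc t)
    then have "t < k" by simp
    then show ?case using Suc by (simp add: A_def tv v_def)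
  qed
  have "{t. t < k \<and> \<bar>L (hist n A \<N> t) (A (hist n A \<N> t)) - test_value n (A (hist n A \<N> t)) \<N>\<bar> > \<epsilon>} = {..<k}"
  proof (rule equalityI[OF _ subsetI])
    fix t assume "t \<in> {..<k}"
    then have t: "t < k" by simp
    have "\<bar>L (Hs L E t) (E t) - v t\<bar> > \<epsilon>" unfolding v_def by (rule vl_far[OF assms])
    then show "t \<in> {t. t < k \<and> \<bar>L (hist n A \<N> t) (A (hist n A \<N> t)) - test_value n (A (hist n A \<N> t)) \<N>\<bar> > \<epsilon>}"
      using t hist[of t] tv[OF t] by (simp add: A_def)
  qed auto
  then have mist: "eps_mistakes n L A \<N> \<epsilon> k = k" unfolding eps_mistakes_def by simp
  have tests: "\<forall>h. channel_test n (A h)"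
    unfolding A_def E_def using channel_test_testop[OF xs(1) xs(3)] by simp
  have bound: "real k \<ge> 1/12 * min (2 ^ n) (sqrt (real G))"
  proof -
    have kr: "real k = 2^m - 1" unfolding k_def by (simp add: of_nat_diff)
    have m2': "(2::real)^1 \<le> 2^m" by (rule power_increasing[OF m(1)]) simp
    have m2: "(2::real)^m \<ge> 2" using m2' by simp
    show ?thesis
    proof (cases "m = n")
      case True
      have "1/12 * min (2 ^ n) (sqrt (real G)) \<le> 1/12 * (2::real)^n" by simp
      also have "\<dots> \<le> 2^m - 1" using True m2 by simp
      finally show ?thesis using kr by simp
    next
      case False
      then have Gn: "G < 6 * 2^m" using m(4) by simp
      then have "real G < real (6 * 2^m)" by (simp only: of_nat_less_iff)
      then have Gl: "real G < 6 * 2^m" by simp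
      have g1: "(1::real) \<le> real G" using G by simp
      have "real G * 1 \<le> real G * real G" by (rule mult_left_mono[OF g1]) simp
      then have "real G \<le> (real G)^2" by (simp add: power2_eq_square)
      then have "sqrt (real G) \<le> real G" by (intro real_le_lsqrt) auto
      then have "1/12 * min (2 ^ n) (sqrt (real G)) \<le> 1/12 * real G" by simp
      also have "\<dots> \<le> 2^m - 1" using Gl m2 by simp
      finally show ?thesis using kr by simp
    qed
  qed
  show "\<exists>\<N> \<in> gate_class n G. \<exists>A :: history \<Rightarrow> complex mat.
                (\<forall>h. channel_test n (A h)) \<and>
                (\<exists>T. real (eps_mistakes n L A \<N> \<epsilon> T) \<ge> 1/12 * min (2 ^ n) (sqrt (real G)))"
    using NG tests mist bound by metis
qed


end
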